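(* For every $n\ge1$ and all $\Delta,\Delta'\in\mathcal{P}_n$: if for every $i\in\mathbb{Z}_n$ we have $d_\Delta(i)=d_{\Delta'}(i)\neq\mathbb{Z}_n$, then $\Delta\equiv\Delta'$.
   Context: Cells are indexed by $\mathbb{Z}_n=\{0,\dots,n-1\}$, indices modulo $n$. An update schedule is an ordered partition $\Delta=(\Delta_1,\dots,\Delta_k)$ of $\mathbb{Z}_n$ into nonempty blocks; $\mathcal{P}_n$ is the set of them. For $u,v\in\mathbb{Z}_n$ with $u\in\Delta_a$, $v\in\Delta_b$, $lab_\Delta((u,v))=\oplus$ if $b\le a$ and $\ominus$ if $a<b$. Define $d^{\leftarrow}_\Delta(i)=\max\{k\in\mathbb{N}:\forall j,\,0<j<k\Rightarrow lab_\Delta((i-j,i-j+1))=\ominus\}$, $d^{\rightarrow}_\Delta(i)=\max\{k\in\mathbb{N}:\forall j,\,0<j<k\Rightarrow lab_\Delta((i+j,i+j-1))=\ominus\}$, and $d_\Delta(i)=\{i-k \bmod n: 0\le k\le d^{\leftarrow}_\Delta(i)\}\cup\{i+k\bmod n:0\le k\le d^{\rightarrow}_\Delta(i)\}$. Two schedules are equivalent, $\Delta\equiv\Delta'$, iff $lab_\Delta$ and $lab_{\Delta'}$ agree on every arc $(i,i+1)$ and $(i+1,i)$, $i\in\mathbb{Z}_n$. *)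

theory Defs
  imports Main
begin

text \<open>Cells are 0,...,n-1 (nat); an update schedule is a list of blocks
  (list index = block position, 0-based).\<close>

definition cmod :: "nat \<Rightarrow> int \<Rightarrow> nat" where
  "cmod n x = nat (x mod int n)"

definition ordered_partitions :: "nat \<Rightarrow> nat set list set" where
  "ordered_partitions n = {D. (\<forall>a<length D. D ! a \<noteq> {})
      \<and> (\<forall>a<length D. \<forall>b<length D. a \<noteq> b \<longrightarrow> D ! a \<inter> D ! b = {})
      \<and> (\<Union>a<length D. D ! a) = {0..<n}}"

definition blk :: "nat set list \<Rightarrow> nat \<Rightarrow> nat" where
  "blk D u = (THE a. a < length D \<and> u \<in> D ! a)"

text \<open>lab D (u,v) = True means \<ominus> (u in block a, v in block b, a < b);
  False means \<oplus> (b \<le> a).\<close>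
definition lab_minus :: "nat set list \<Rightarrow> nat \<times> nat \<Rightarrow> bool" where
  "lab_minus D e = (blk D (fst e) < blk D (snd e))"

definition dleft :: "nat \<Rightarrow> nat set list \<Rightarrow> nat \<Rightarrow> nat" where
  "dleft n D i = (GREATEST k. \<forall>j. 0 < j \<and> j < k \<longrightarrow>
      lab_minus D (cmod n (int i - int j), cmod n (int i - int j + 1)))"

definition dright :: "nat \<Rightarrow> nat set list \<Rightarrow> nat \<Rightarrow> nat" where
  "dright n D i = (GREATEST k. \<forall>j. 0 < j \<and> j < k \<longrightarrow>
      lab_minus D (cmod n (int i + int j), cmod n (int i + int j - 1)))"

definition dset :: "nat \<Rightarrow> nat set list \<Rightarrow> nat \<Rightarrow> nat set" where
  "dset n D i = {cmod n (int i - int k) | k. k \<le> dleft n D i}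
              \<union> {cmod n (int i + int k) | k. k \<le> dright n D i}"

definition sched_equiv :: "nat \<Rightarrow> nat set list \<Rightarrow> nat set list \<Rightarrow> bool" where
  "sched_equiv n D D' = (\<forall>i<n.
      lab_minus D (i, cmod n (int i + 1)) = lab_minus D' (i, cmod n (int i + 1))
    \<and> lab_minus D (cmod n (int i + 1), i) = lab_minus D' (cmod n (int i + 1), i))"

end

theory Submission
  imports Defs
begin

lemma cycle_aux:
  fixes f :: "nat \<Rightarrow> nat"
  assumes "n \<ge> 1" "f n = f 0"
  shows "\<exists>j. 0 < j \<and> \<not> (f j < f (j - 1))"
proof (rule ccontr)
  assume H: "\<not> ?thesis"
  have "\<forall>j. j \<le> n \<longrightarrow> f j + j \<le> f 0"
  proof
    fix j show "j \<le> n \<longrightarrow> f j + j \<le> f 0"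
    proof (induction j)
      case 0 then show ?case by simp
    next
      case (Suc j)
      have "f (Suc j) < f j" using H by (metis diff_Suc_1 zero_less_Suc)
      then show ?case using Suc by auto
    qed
  qed
  then have "f n + n \<le> f 0" by simp
  then show False using assms by simp
qed

lemma greatest_aux:
  fixes j0 :: nat
  assumes "j0 > 0" "\<not> P j0"
  shows "(GREATEST k. \<forall>j. 0<j \<and> j<k \<longrightarrow> P j) \<ge> 1"
    and "(GREATEST k. \<forall>j. 0<j \<and> j<k \<longrightarrow> P j) \<ge> 2 \<longleftrightarrow> P 1"
proof -
  let ?Q = "\<lambda>k. \<forall>j. 0<j \<and> j<k \<longrightarrow> P j"
  have bnd: "\<forall>y. ?Q y \<longrightarrow> y \<le> j0"
  proof (intro allI impI)
    fix y assume "?Q y"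
    show "y \<le> j0"
    proof (rule ccontr)
      assume "\<not> y \<le> j0"
      then have "j0 < y" by simp
      then show False using \<open>?Q y\<close> assms by blast
    qed
  qed
  show "(GREATEST k. ?Q k) \<ge> 1"
    by (rule Greatest_le_nat[of ?Q 1 j0]) (use bnd in auto)
  show "(GREATEST k. ?Q k) \<ge> 2 \<longleftrightarrow> P 1"
  proof
    assume "(GREATEST k. ?Q k) \<ge> 2"
    moreover have "?Q (GREATEST k. ?Q k)"
      by (rule GreatestI_nat[of ?Q 0 j0]) (use bnd in auto)
    ultimately show "P 1" by auto
  next
    assume "P 1"
    then have "?Q 2" by (metis One_nat_def less_2_cases not_less_zero)
    then show "(GREATEST k. ?Q k) \<ge> 2"
      by (rule Greatest_le_nat) (use bnd in auto)
  qed
qed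

lemma cmod_eq:
  assumes "n \<ge> 1"
  shows "cmod n a = cmod n b \<longleftrightarrow> a mod int n = b mod int n"
proof -
  have "a mod int n \<ge> 0" "b mod int n \<ge> 0" using assms by simp_all
  then show ?thesis by (simp add: cmod_def eq_nat_nat_iff)
qed

lemma cmod_lt: "n \<ge> 1 \<Longrightarrow> cmod n a < n"
  by (simp add: cmod_def nat_less_iff)

lemma cover:
  fixes n i L R :: nat
  assumes "n \<ge> 1" "L \<ge> 1" "R + 2 \<ge> n"
  shows "{cmod n (int i - int k) | k. k \<le> L} \<union> {cmod n (int i + int k) | k. k \<le> R} = {0..<n}"
proof
  show "{cmod n (int i - int k) | k. k \<le> L} \<union> {cmod n (int i + int k) | k. k \<le> R} \<subseteq> {0..<n}"
    using cmod_lt[OF assms(1)] by auto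
next
  show "{0..<n} \<subseteq> {cmod n (int i - int k) | k. k \<le> L} \<union> {cmod n (int i + int k) | k. k \<le> R}"
  proof
    fix x assume x: "x \<in> {0..<n}"
    define m where "m = nat ((int x - int i) mod int n)"
    have m0: "int m = (int x - int i) mod int n" using assms(1) by (simp add: m_def)
    have mn: "m < n" proof -
    have "(int x - int i) mod int n < int n" using assms(1) by simp
    then show ?thesis using m0 by linarith
  qed
    have xe: "int x mod int n = int x" using x by simp
    show "x \<in> {cmod n (int i - int k) | k. k \<le> L} \<union> {cmod n (int i + int k) | k. k \<le> R}"
    proof (cases "m \<le> R")
      case True
      have "cmod n (int i + int m) = x"
      proof -
        have "(int i + (int x - int i) mod int n) mod int n = (int i + (int x - int i)) mod int n"
          by (rule mod_add_right_eq)
        then have q1: "(int i + int m) mod int n = int x" using m0 xe by simp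
        then show ?thesis unfolding cmod_def by simp
      qed
      then show ?thesis using True by blast
    next
      case False
      then have "m = n - 1" using mn assms by linarith
      then have "int n - 1 = (int x - int i) mod int n" using m0 assms(1) by simp
      then have e1: "int i - 1 + int n = int i + (int x - int i) mod int n" by simp
      have "(int i - 1) mod int n = (int i - 1 + int n) mod int n" by simp
      also have "\<dots> = (int i + (int x - int i) mod int n) mod int n" by (simp only: e1)
      also have "\<dots> = (int i + (int x - int i)) mod int n" by (rule mod_add_right_eq)
      also have "\<dots> = int x mod int n" by simp
      finally have "(int i - 1) mod int n = int x mod int n" .
      then have "cmod n (int i - int 1) = x" unfolding cmod_def using xe by simp
      then show ?thesis using assms(2) by blast
    qed
  qed
qed


lemma cover2:
  fixes n i L R :: nat
  assumes "n \<ge> 1" "R \<ge> 1" "L + 2 \<ge> n"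
  shows "{cmod n (int i - int k) | k. k \<le> L} \<union> {cmod n (int i + int k) | k. k \<le> R} = {0..<n}"
proof
  show "{cmod n (int i - int k) | k. k \<le> L} \<union> {cmod n (int i + int k) | k. k \<le> R} \<subseteq> {0..<n}"
    using cmod_lt[OF assms(1)] by auto
next
  show "{0..<n} \<subseteq> {cmod n (int i - int k) | k. k \<le> L} \<union> {cmod n (int i + int k) | k. k \<le> R}"
  proof
    fix x assume x: "x \<in> {0..<n}"
    define m where "m = nat ((int i - int x) mod int n)"
    have m0: "int m = (int i - int x) mod int n" using assms(1) by (simp add: m_def)
    have mn: "m < n" proof -
    have "(int i - int x) mod int n < int n" using assms(1) by simp
    then show ?thesis using m0 by linarith
  qed
    have xe: "int x mod int n = int x" using x by simp
    show "x \<in> {cmod n (int i - int k) | k. k \<le> L} \<union> {cmod n (int i + int k) | k. k \<le> R}"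
    proof (cases "m \<le> L")
      case True
      have "cmod n (int i - int m) = x"
      proof -
        have "(int i - (int i - int x) mod int n) mod int n = (int i - (int i - int x)) mod int n"
          by (rule mod_diff_right_eq)
        then have q1: "(int i - int m) mod int n = int x" using m0 xe by simp
        then show ?thesis unfolding cmod_def by simp
      qed
      then show ?thesis using True by blast
    next
      case False
      then have "m = n - 1" using mn assms by linarith
      then have "int n - 1 = (int i - int x) mod int n" using m0 assms(1) by simp
      then have e1: "int i + 1 - int n = int i - (int i - int x) mod int n" by simp
      have "(int i + 1) mod int n = (int i + 1 - int n) mod int n" by simp
      also have "\<dots> = (int i - (int i - int x) mod int n) mod int n" by (simp only: e1)
      also have "\<dots> = (int i - (int i - int x)) mod int n" by (rule mod_diff_right_eq)
      also have "\<dots> = int x mod int n" by simp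
      finally have "(int i + 1) mod int n = int x mod int n" .
      then have "cmod n (int i + int 1) = x" unfolding cmod_def using xe by simp
      then show ?thesis using assms(2) by blast
    qed
  qed
qed


lemma dvd_le_aux:
  assumes "n \<ge> 1" "(a::int) mod int n = b mod int n" "b - a = int m" "m > 0"
  shows "n \<le> m"
proof -
  have "int n dvd b - a" using assms(2) by (metis mod_eq_dvd_iff)
  then have "n dvd m" using assms(3) by simp
  then show ?thesis using assms(4) by (simp add: dvd_imp_le)
qed

lemma left_key:
  fixes n i L R :: nat
  assumes "n \<ge> 1" "L \<ge> 1" "R \<ge> 1"
    and ne: "{cmod n (int i - int k) | k. k \<le> L} \<union> {cmod n (int i + int k) | k. k \<le> R} \<noteq> {0..<n}"
  shows "L \<ge> 2 \<longleftrightarrow> cmod n (int i - 2) \<in> {cmod n (int i - int k) | k. k \<le> L} \<union> {cmod n (int i + int k) | k. k \<le> R}"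
proof
  assume "L \<ge> 2" then show "cmod n (int i - 2) \<in> {cmod n (int i - int k) | k. k \<le> L} \<union> {cmod n (int i + int k) | k. k \<le> R}"
    by (metis (mono_tags, lifting) UnI1 mem_Collect_eq of_nat_numeral)
next
  assume mem: "cmod n (int i - 2) \<in> {cmod n (int i - int k) | k. k \<le> L} \<union> {cmod n (int i + int k) | k. k \<le> R}"
  show "L \<ge> 2"
  proof (rule ccontr)
    assume "\<not> L \<ge> 2"
    then have L1: "L = 1" using assms by simp
    have "R + 2 \<ge> n"
    proof -
      from mem consider (a) k where "k \<le> L" "cmod n (int i - 2) = cmod n (int i - int k)"
        | (b) k where "k \<le> R" "cmod n (int i - 2) = cmod n (int i + int k)" by blast
      then show ?thesis
      proof cases
        case a
        then have q1: "(int i - 2) mod int n = (int i - int k) mod int n" using cmod_eq assms(1) by blast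
        moreover have q2: "(int i - int k) - (int i - 2) = int (2 - k)" using a L1 by auto
        moreover have q3: "2 - k > 0" using a L1 by auto
        have "n \<le> 2 - k" by (rule dvd_le_aux[OF assms(1) q1 q2 q3])
        then show ?thesis by simp
      next
        case b
        then have q1: "(int i - 2) mod int n = (int i + int k) mod int n" using cmod_eq assms(1) by blast
        moreover have q2: "(int i + int k) - (int i - 2) = int (k + 2)" by simp
        have "n \<le> k + 2" by (rule dvd_le_aux[OF assms(1) q1 q2]) simp
        then show ?thesis using b by simp
      qed
    qed
    then show False using cover[OF assms(1) assms(2)] ne by blast
  qed
qed

lemma right_key:
  fixes n i L R :: nat
  assumes "n \<ge> 1" "L \<ge> 1" "R \<ge> 1"
    and ne: "{cmod n (int i - int k) | k. k \<le> L} \<union> {cmod n (int i + int k) | k. k \<le> R} \<noteq> {0..<n}"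
  shows "R \<ge> 2 \<longleftrightarrow> cmod n (int i + 2) \<in> {cmod n (int i - int k) | k. k \<le> L} \<union> {cmod n (int i + int k) | k. k \<le> R}"
proof
  assume "R \<ge> 2" then show "cmod n (int i + 2) \<in> {cmod n (int i - int k) | k. k \<le> L} \<union> {cmod n (int i + int k) | k. k \<le> R}"
    by (metis (mono_tags, lifting) UnI2 mem_Collect_eq of_nat_numeral)
next
  assume mem: "cmod n (int i + 2) \<in> {cmod n (int i - int k) | k. k \<le> L} \<union> {cmod n (int i + int k) | k. k \<le> R}"
  show "R \<ge> 2"
  proof (rule ccontr)
    assume "\<not> R \<ge> 2"
    then have R1: "R = 1" using assms by simp
    have "L + 2 \<ge> n"
    proof -
      from mem consider (a) k where "k \<le> L" "cmod n (int i + 2) = cmod n (int i - int k)"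
        | (b) k where "k \<le> R" "cmod n (int i + 2) = cmod n (int i + int k)" by blast
      then show ?thesis
      proof cases
        case a
        then have q1: "(int i - int k) mod int n = (int i + 2) mod int n" using cmod_eq assms(1) by metis
        moreover have q2: "(int i + 2) - (int i - int k) = int (k + 2)" by simp
        have "n \<le> k + 2" by (rule dvd_le_aux[OF assms(1) q1 q2]) simp
        then show ?thesis using a by simp
      next
        case b
        then have q1: "(int i + int k) mod int n = (int i + 2) mod int n" using cmod_eq assms(1) by metis
        moreover have q2: "(int i + 2) - (int i + int k) = int (2 - k)" using b R1 by auto
        moreover have q3: "2 - k > 0" using b R1 by auto
        have "n \<le> 2 - k" by (rule dvd_le_aux[OF assms(1) q1 q2 q3])
        then show ?thesis by simp
      qed
    qed
    then show False using cover2[OF assms(1) assms(3)] ne by blast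
  qed
qed

lemma dleft_props:
  assumes "n \<ge> 1"
  shows "dleft n D i \<ge> 1"
    and "dleft n D i \<ge> 2 \<longleftrightarrow> lab_minus D (cmod n (int i - 1), cmod n (int i))"
proof -
  define f where "f j = blk D (cmod n (int i - int j))" for j
  have "f n = f 0" unfolding f_def cmod_def by simp
  then obtain j0 where j0: "0 < j0" "\<not> (f j0 < f (j0 - 1))" using cycle_aux assms by blast
  have e: "cmod n (int i - int j0 + 1) = cmod n (int i - int (j0 - 1))" using j0(1) by (simp add: of_nat_diff algebra_simps)
  have np: "\<not> lab_minus D (cmod n (int i - int j0), cmod n (int i - int j0 + 1))"
    using j0(2) e unfolding lab_minus_def f_def by simp
  show "dleft n D i \<ge> 1" unfolding dleft_def
    by (rule greatest_aux(1)[where P="\<lambda>j. lab_minus D (cmod n (int i - int j), cmod n (int i - int j + 1))", OF j0(1) np])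
  show "dleft n D i \<ge> 2 \<longleftrightarrow> lab_minus D (cmod n (int i - 1), cmod n (int i))"
    unfolding dleft_def using greatest_aux(2)[OF j0(1), of "\<lambda>j. lab_minus D (cmod n (int i - int j), cmod n (int i - int j + 1))"] np
    by simp
qed

lemma dright_props:
  assumes "n \<ge> 1"
  shows "dright n D i \<ge> 1"
    and "dright n D i \<ge> 2 \<longleftrightarrow> lab_minus D (cmod n (int i + 1), cmod n (int i))"
proof -
  define f where "f j = blk D (cmod n (int i + int j))" for j
  have "f n = f 0" unfolding f_def cmod_def by simp
  then obtain j0 where j0: "0 < j0" "\<not> (f j0 < f (j0 - 1))" using cycle_aux assms by blast
  have e: "cmod n (int i + int j0 - 1) = cmod n (int i + int (j0 - 1))" using j0(1) by (simp add: of_nat_diff algebra_simps)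
  have np: "\<not> lab_minus D (cmod n (int i + int j0), cmod n (int i + int j0 - 1))"
    using j0(2) e unfolding lab_minus_def f_def by simp
  show "dright n D i \<ge> 1" unfolding dright_def
    by (rule greatest_aux(1)[where P="\<lambda>j. lab_minus D (cmod n (int i + int j), cmod n (int i + int j - 1))", OF j0(1) np])
  show "dright n D i \<ge> 2 \<longleftrightarrow> lab_minus D (cmod n (int i + 1), cmod n (int i))"
    unfolding dright_def using greatest_aux(2)[OF j0(1), of "\<lambda>j. lab_minus D (cmod n (int i + int j), cmod n (int i + int j - 1))"] np
    by simp
qed

lemma left_iff:
  assumes "n \<ge> 1" "dset n D i \<noteq> {0..<n}"
  shows "lab_minus D (cmod n (int i - 1), cmod n (int i)) \<longleftrightarrow> cmod n (int i - 2) \<in> dset n D i"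
  using left_key[OF assms(1) dleft_props(1)[OF assms(1), where D=D and i=i] dright_props(1)[OF assms(1), where D=D and i=i], where i=i]
    dleft_props(2)[OF assms(1), where D=D and i=i] assms(2) unfolding dset_def by blast

lemma right_iff:
  assumes "n \<ge> 1" "dset n D i \<noteq> {0..<n}"
  shows "lab_minus D (cmod n (int i + 1), cmod n (int i)) \<longleftrightarrow> cmod n (int i + 2) \<in> dset n D i"
  using right_key[OF assms(1) dleft_props(1)[OF assms(1), where D=D and i=i] dright_props(1)[OF assms(1), where D=D and i=i], where i=i]
    dright_props(2)[OF assms(1), where D=D and i=i] assms(2) unfolding dset_def by blast

theorem mainTheorem11:
  fixes n :: nat and D D' :: "nat set list"
  assumes "n \<ge> 1"
    and "D \<in> ordered_partitions n" and "D' \<in> ordered_partitions n"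
    and "\<forall>i<n. dset n D i = dset n D' i \<and> dset n D i \<noteq> {0..<n}"
  shows "sched_equiv n D D'"
  unfolding sched_equiv_def
proof (intro allI impI conjI)
  fix i assume i: "i < n"
  define i' where "i' = cmod n (int i + 1)"
  have i'n: "i' < n" unfolding i'_def using cmod_lt assms(1) by blast
  have ci: "cmod n (int i) = i" using i unfolding cmod_def by simp
  have ci': "cmod n (int i') = i'" using i'n unfolding cmod_def by simp
  have cim: "cmod n (int i' - 1) = i"
  proof -
    have "int i' = (int i + 1) mod int n" unfolding i'_def cmod_def using assms(1) by simp
    then have q1: "(int i' - 1) mod int n = int i mod int n" by (simp add: mod_diff_left_eq)
    then show ?thesis using i unfolding cmod_def by simp
  qed
  have h1: "dset n D i' = dset n D' i'" "dset n D i' \<noteq> {0..<n}" "dset n D' i' \<noteq> {0..<n}"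
    using assms(4) i'n by auto
  have L: "lab_minus D (cmod n (int i' - 1), cmod n (int i')) \<longleftrightarrow> lab_minus D' (cmod n (int i' - 1), cmod n (int i'))"
    using left_iff[OF assms(1) h1(2)] left_iff[OF assms(1) h1(3)] h1(1) by blast
  show "lab_minus D (i, cmod n (int i + 1)) = lab_minus D' (i, cmod n (int i + 1))"
    unfolding i'_def[symmetric] using L by (simp only: cim ci')
  have h2: "dset n D i = dset n D' i" "dset n D i \<noteq> {0..<n}" "dset n D' i \<noteq> {0..<n}"
    using assms(4) i by auto
  have R: "lab_minus D (cmod n (int i + 1), cmod n (int i)) \<longleftrightarrow> lab_minus D' (cmod n (int i + 1), cmod n (int i))"
    using right_iff[OF assms(1) h2(2)] right_iff[OF assms(1) h2(3)] h2(1) by blast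
  show "lab_minus D (cmod n (int i + 1), i) = lab_minus D' (cmod n (int i + 1), i)"
    using R by (simp only: ci)
qed

end
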